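(* Let $a<b$ and let $f:[a,b]\rightarrow\mathbb{R}$ be a twice continuously differentiable mapping in $(a,b)$ with $f''\in L^2[a,b]$. Then \[ \left|\frac{f(a)+f(b)}{2}-\frac{1}{b-a}\int_{a}^{b}f(t)\,dt\right|\leq \frac{(b-a)^{3/2}}{2\sqrt{3}\pi}\|f''\|_2. \]
   Context: $\|g\|_2=\left(\int_a^b g(t)^2\,dt\right)^{1/2}$. *)

theory Defs
  imports "HOL-Analysis.Analysis"
begin

definition L2_norm_on :: "real \<Rightarrow> real \<Rightarrow> (real \<Rightarrow> real) \<Rightarrow> real" where
  "L2_norm_on a b g = sqrt (integral {a..b} (\<lambda>t. (g t)^2))"

end

theory Submission
  imports Defs
begin

lemma cs_ineq:
  fixes u v :: "real \<Rightarrow> real"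
  assumes iu: "(\<lambda>t. (u t)^2) integrable_on S" and iv: "(\<lambda>t. (v t)^2) integrable_on S"
    and iuv: "(\<lambda>t. u t * v t) integrable_on S" and pos: "integral S (\<lambda>t. (u t)^2) > 0"
  shows "(integral S (\<lambda>t. u t * v t))^2 \<le> integral S (\<lambda>t. (u t)^2) * integral S (\<lambda>t. (v t)^2)"
proof -
  define A where "A = integral S (\<lambda>t. (u t)^2)"
  define B where "B = integral S (\<lambda>t. (v t)^2)"
  define I where "I = integral S (\<lambda>t. u t * v t)"
  define s where "s = - I / A"
  have i1: "(\<lambda>t. s^2 * (u t)^2) integrable_on S" using integrable_on_cmult_left[OF iu, of "s^2"] by simp
  have i2: "(\<lambda>t. 2 * s * (u t * v t)) integrable_on S" using integrable_on_cmult_left[OF iuv, of "2 * s"] by simp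
  have i12: "(\<lambda>t. s^2 * (u t)^2 + 2 * s * (u t * v t)) integrable_on S" using i1 i2 by (rule integrable_add)
  have "0 \<le> integral S (\<lambda>t. s^2 * (u t)^2 + 2 * s * (u t * v t) + (v t)^2)"
  proof (rule integral_nonneg)
    show "(\<lambda>t. s^2 * (u t)^2 + 2 * s * (u t * v t) + (v t)^2) integrable_on S"
      using i12 iv by (rule integrable_add)
    fix x assume "x \<in> S"
    have "s^2 * (u x)^2 + 2 * s * (u x * v x) + (v x)^2 = (s * u x + v x)^2" by algebra
    then show "0 \<le> s^2 * (u x)^2 + 2 * s * (u x * v x) + (v x)^2" by simp
  qed
  also have "integral S (\<lambda>t. s^2 * (u t)^2 + 2 * s * (u t * v t) + (v t)^2) = s^2 * A + 2 * s*I + B"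
    using i1 i2 i12 iv iu iuv by (simp add: integral_add A_def B_def I_def)
  finally have "0 \<le> s^2 * A + 2 * s*I + B" .
  moreover have "s^2 * A + 2 * s*I + B = B - I^2/A" using pos unfolding s_def A_def[symmetric]
    by (simp add: field_simps power2_eq_square)
  ultimately have "I^2/A \<le> B" by simp
  then show ?thesis using pos unfolding A_def[symmetric] B_def[symmetric] I_def[symmetric]
    by (simp add: divide_le_eq mult.commute)
qed

theorem corollary2p6:
  fixes f f' f'' :: "real \<Rightarrow> real" and a b :: real
  assumes "a < b"
    and "continuous_on {a..b} f"
    and "\<And>x. x \<in> {a<..<b} \<Longrightarrow> (f has_real_derivative f' x) (at x)"
    and "\<And>x. x \<in> {a<..<b} \<Longrightarrow> (f' has_real_derivative f'' x) (at x)"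
    and "continuous_on {a<..<b} f''"
    and "(\<lambda>t. (f'' t)^2) integrable_on {a..b}"
  shows "\<bar>(f a + f b) / 2 - (1 / (b - a)) * integral {a..b} f\<bar>
           \<le> (b - a) powr (3/2) / (2 * sqrt 3 * pi) * L2_norm_on a b f''"
proof -
  note ab = assms(1) and contf = assms(2) and df = assms(3) and df' = assms(4)
    and cf'' = assms(5) and sq = assms(6)
  define K where "K t = (t - a) * (b - t) / 2" for t
  define dK where "dK t = (a + b - 2 * t) / 2" for t
  define B where "B = integral {a..b} (\<lambda>t. (f'' t)^2)"
  define m where "m = (a + b) / 2"
  have B0: "0 \<le> B" unfolding B_def by (rule integral_nonneg[OF sq]) simp
  have incr: "\<bar>f' d - f' c\<bar> \<le> sqrt ((b - a) * B)" if cd: "a < c" "c < d" "d < b" for c d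
  proof -
    have sub: "{c..d} \<subseteq> {a<..<b}" using cd by auto
    have ci: "continuous_on {c..d} f''" using cf'' sub by (rule continuous_on_subset)
    have hi: "(f'' has_integral (f' d - f' c)) {c..d}"
    proof (rule fundamental_theorem_of_calculus)
      show "c \<le> d" using cd by simp
      fix x assume "x \<in> {c..d}"
        then have "x \<in> {a<..<b}" using sub by blast
        then show "(f' has_vector_derivative f'' x) (at x within {c..d})"
          using has_field_derivative_at_within[OF df'] 
          by (simp add: has_real_derivative_iff_has_vector_derivative[symmetric])
    qed
    have isq: "(\<lambda>t. (f'' t)^2) integrable_on {c..d}"
      using sq by (rule integrable_subinterval_real) (use cd in auto)
    have cs: "(integral {c..d} (\<lambda>t. 1 * f'' t))^2 \<le> integral {c..d} (\<lambda>t. 1^2) * integral {c..d} (\<lambda>t. (f'' t)^2)"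
      by (rule cs_ineq) (use isq hi cd in \<open>auto simp: has_integral_iff\<close>)
    have "integral {c..d} (\<lambda>t. (f'' t)^2) \<le> B"
      unfolding B_def by (rule integral_subset_le) (use isq sq cd in auto)
    moreover have "0 \<le> integral {c..d} (\<lambda>t. (f'' t)^2)" by (rule integral_nonneg[OF isq]) simp
    ultimately have "(d - c) * integral {c..d} (\<lambda>t. (f'' t)^2) \<le> (b - a) * B"
      using cd by (intro mult_mono) auto
    then have "(f' d - f' c)^2 \<le> (b - a) * B"
      using cs hi cd by (auto simp: has_integral_iff)
    then show ?thesis by (metis real_sqrt_abs real_sqrt_le_mono)
  qed
  define M where "M = \<bar>f' m\<bar> + sqrt ((b - a) * B)"
  have bnd: "\<bar>f' t\<bar> \<le> M" if "t \<in> {a<..<b}" for t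
  proof -
    have mm: "a < m" "m < b" using ab by (auto simp: m_def)
    have "\<bar>f' t - f' m\<bar> \<le> sqrt ((b - a) * B)"
    proof (cases t m rule: linorder_cases)
      case less then show ?thesis using incr[of t m] that mm by (auto simp: abs_minus_commute)
    next
      case equal then show ?thesis using ab B0 by simp
    next
      case greater then show ?thesis using incr[of m t] that mm by auto
    qed
    then show ?thesis unfolding M_def by linarith
  qed
  define G where "G t = (if t \<in> {a<..<b} then K t * f' t else 0)" for t
  have K0: "0 \<le> K t" if "t \<in> {a..b}" for t using that unfolding K_def by auto
  have Gb: "\<bar>G t\<bar> \<le> M * K t" if "t \<in> {a..b}" for t
  proof (cases "t \<in> {a<..<b}")
    case True
    then have "\<bar>G t\<bar> = K t * \<bar>f' t\<bar>" using K0[OF that] by (simp add: G_def abs_mult)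
    also have "\<dots> \<le> K t * M" using bnd[OF True] K0[OF that] by (rule mult_left_mono)
    finally show ?thesis by (simp add: mult.commute)
  next
    case False
    have "0 \<le> M" unfolding M_def using B0 ab by simp
    then show ?thesis using False K0[OF that] unfolding G_def by (simp only: if_False abs_zero) (rule mult_nonneg_nonneg)
  qed
  have contG: "continuous_on {a..b} G"
  proof (clarsimp simp: continuous_on_eq_continuous_within)
    fix x assume x: "a \<le> x" "x \<le> b"
    show "continuous (at x within {a..b}) G"
    proof (cases "x \<in> {a<..<b}")
      case True
      have "continuous_on {a<..<b} (\<lambda>t. K t * f' t)"
        unfolding K_def
        using df' by (intro continuous_intros continuous_at_imp_continuous_on ballI DERIV_isCont) auto
      then have "continuous_on {a<..<b} G" by (rule continuous_on_cong[THEN iffD1, rotated -1]) (auto simp: G_def)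
      then have "isCont G x" using True by (simp add: continuous_on_eq_continuous_at)
      then show ?thesis by (rule continuous_at_imp_continuous_within)
    next
      case False
      then have xab: "x = a \<or> x = b" using x by auto
      then have Gx: "G x = 0" and Kx: "K x = 0" by (auto simp: G_def K_def)
      have "((\<lambda>t. M * K t) \<longlongrightarrow> M * K x) (at x within {a..b})"
        unfolding K_def by (intro tendsto_intros) auto
      then have lim0: "((\<lambda>t. M * K t) \<longlongrightarrow> 0) (at x within {a..b})" using Kx by simp
      have ev: "eventually (\<lambda>t. norm (G t) \<le> M * K t) (at x within {a..b})"
        using Gb by (auto simp: eventually_at_filter)
      have "(G \<longlongrightarrow> 0) (at x within {a..b})" by (rule Lim_null_comparison[OF ev lim0])
      then show ?thesis using Gx by (simp add: continuous_within)
    qed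
  qed
  define F where "F t = G t - dK t * f t - integral {a..t} f" for t
  have contF: "continuous_on {a..b} F"
    unfolding F_def dK_def
    by (intro continuous_intros contG contf indefinite_integral_continuous_1
        integrable_continuous_interval) auto
  have derF: "(F has_vector_derivative (K x * f'' x)) (at x)" if x: "x \<in> {a<..<b}" for x
  proof -
    have dKd: "(K has_real_derivative dK x) (at x)"
      unfolding K_def dK_def by (auto intro!: derivative_eq_intros simp: field_simps)
    have ddKd: "(dK has_real_derivative -1) (at x)"
      unfolding dK_def by (auto intro!: derivative_eq_intros simp: field_simps)
    have d1: "((\<lambda>t. K t * f' t) has_real_derivative (dK x * f' x + K x * f'' x)) (at x)"
    proof (rule DERIV_cong[OF DERIV_mult[OF dKd df'[OF x]]])
      show "dK x * f' x + f'' x * K x = dK x * f' x + K x * f'' x" by simp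
    qed
    have dG: "(G has_real_derivative (dK x * f' x + K x * f'' x)) (at x)"
      by (rule has_field_derivative_transform_within_open[OF d1 _ x]) (auto simp: G_def)
    have dI0: "((\<lambda>u. integral {a..u} f) has_vector_derivative f x) (at x within {a..b})"
      using x by (intro integral_has_vector_derivative contf) auto
    have dI: "((\<lambda>u. integral {a..u} f) has_real_derivative f x) (at x)"
      using dI0 x by (simp add: at_within_Icc_at has_real_derivative_iff_has_vector_derivative)
    have dd: "((\<lambda>t. dK t * f t) has_real_derivative (-1 * f x + dK x * f' x)) (at x)"
    proof (rule DERIV_cong[OF DERIV_mult[OF ddKd df[OF x]]])
      show "-1 * f x + f' x * dK x = -1 * f x + dK x * f' x" by simp
    qed
    have "(F has_real_derivative (dK x * f' x + K x * f'' x - (-1 * f x + dK x * f' x) - f x)) (at x)"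
      unfolding F_def by (intro DERIV_diff dG dd dI)
    then show ?thesis by (simp add: has_real_derivative_iff_has_vector_derivative[symmetric])
  qed
  have hI: "((\<lambda>t. K t * f'' t) has_integral (F b - F a)) {a..b}"
    by (rule fundamental_theorem_of_calculus_interior[OF _ contF derF]) (use ab in auto)
  have Fba: "F b - F a = (b - a) / 2 * (f a + f b) - integral {a..b} f"
    by (simp add: F_def G_def dK_def field_simps)
  define P where "P t = ((b-a)^2*(t-a)^3/3 - (b-a)*(t-a)^4/2 + (t-a)^5/5)/4" for t
  have hK: "((\<lambda>t. (K t)^2) has_integral (P b - P a)) {a..b}"
  proof (rule fundamental_theorem_of_calculus)
    show "a \<le> b" using ab by simp
    fix x
      have "(P has_real_derivative (K x)^2) (at x within {a..b})"
        unfolding P_def K_def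
        by (auto intro!: derivative_eq_intros simp: eval_nat_numeral) (simp add: field_simps; algebra)
      then show "(P has_vector_derivative (K x)^2) (at x within {a..b})"
        by (simp add: has_real_derivative_iff_has_vector_derivative)
  qed
  define A where "A = (b - a)^5 / 120"
  have PA: "P b - P a = A" by (simp add: P_def A_def field_simps) algebra
  have A0: "A > 0" using ab by (simp add: A_def)
  define I where "I = (b - a) / 2 * (f a + f b) - integral {a..b} f"
  have "I^2 \<le> A * B"
    using cs_ineq[of K "{a..b}" f''] hK hI sq A0 unfolding I_def B_def PA Fba
    by (auto simp: has_integral_iff PA Fba)
  then have "\<bar>I\<bar> \<le> sqrt A * sqrt B"
    by (metis real_sqrt_abs real_sqrt_le_mono real_sqrt_mult)
  have lhs: "(f a + f b) / 2 - (1 / (b - a)) * integral {a..b} f = I / (b - a)"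
    using ab by (simp add: I_def field_simps)
  define h where "h = b - a"
  have h0: "h > 0" using ab by (simp add: h_def)
  have h3: "h powr (3/2) = sqrt (h^3)"
  proof -
    have "sqrt (h^3) = (h^3) powr (1/2)" using h0 by (simp add: powr_half_sqrt)
    also have "\<dots> = (h powr 3) powr (1/2)" using h0 by (simp add: powr_realpow)
    also have "\<dots> = h powr (3/2)" by (simp add: powr_powr)
    finally show ?thesis by simp
  qed
  have pi2: "12 * pi^2 \<le> 120"
  proof -
    have p: "pi \<le> 315/100" using pi_approx(2) by simp
    have "pi * pi \<le> (315/100) * (315/100)" using p pi_gt_zero by (intro mult_mono) auto
    then show ?thesis by (simp add: power2_eq_square)
  qed
  have den: "2 * sqrt 3 * pi = sqrt (12 * pi^2)"
  proof -
    have "sqrt 12 = sqrt (2^2 * 3)" by simp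
    then have "sqrt 12 = 2 * sqrt 3" by (simp only: real_sqrt_mult) simp
    then show ?thesis using pi_gt_zero by (simp add: real_sqrt_mult)
  qed
  have c1: "sqrt A / h \<le> h powr (3/2) / (2 * sqrt 3 * pi)"
  proof -
    have "sqrt A / h = sqrt (h^3 / 120)"
    proof -
      have "A = h^2 * (h^3 / 120)" by (simp add: A_def h_def[symmetric] eval_nat_numeral)
      then have "sqrt A = sqrt (h^2) * sqrt (h^3 / 120)" by (simp only: real_sqrt_mult)
      then have "sqrt A = h * sqrt (h^3 / 120)" using h0 by simp
      then show ?thesis using h0 by simp
    qed
    also have "\<dots> \<le> sqrt (h^3 / (12 * pi^2))"
      using pi2 h0 by (intro real_sqrt_le_mono divide_left_mono) auto
    also have "\<dots> = h powr (3/2) / (2 * sqrt 3 * pi)"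
      by (simp add: h3 den real_sqrt_divide)
    finally show ?thesis .
  qed
  have "\<bar>I / h\<bar> = \<bar>I\<bar> / h" using h0 by simp
  also have "\<dots> \<le> sqrt A * sqrt B / h" using \<open>\<bar>I\<bar> \<le> sqrt A * sqrt B\<close> h0
    by (simp add: divide_right_mono)
  also have "\<dots> = sqrt A / h * sqrt B" by simp
  also have "\<dots> \<le> h powr (3/2) / (2 * sqrt 3 * pi) * sqrt B"
    using c1 by (rule mult_right_mono) (simp add: B0)
  finally show ?thesis unfolding lhs L2_norm_on_def B_def[symmetric] h_def .
qed

end
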